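(* Let $0<\alpha<\infty$, $0<\beta<\infty$, $u\in H(\mathbb{D})$, $\varphi\in S(\mathbb{D})$, and suppose $uC_\varphi$ is a bounded operator from $\mathcal{B}^\alpha$ into $\mathcal{Z}_\beta$. Then $$\|uC_\varphi\|_{e,\tilde{\mathcal{B}}^\alpha\to\mathcal{Z}_\beta}=\|uC_\varphi\|_{e,\mathcal{B}^\alpha\to\mathcal{Z}_\beta}.$$
   Context: $\mathbb{D}$ is the open unit disk, $H(\mathbb{D})$ the holomorphic functions on $\mathbb{D}$, $S(\mathbb{D})$ the holomorphic self-maps of $\mathbb{D}$; $uC_\varphi f(z)=u(z)f(\varphi(z))$. $\mathcal{B}^\alpha$ is the space of $f\in H(\mathbb{D})$ with $\sup_z(1-|z|^2)^\alpha|f'(z)|<\infty$, normed by $|f(0)|+\sup_z(1-|z|^2)^\alpha|f'(z)|$; $\tilde{\mathcal{B}}^\alpha=\{f\in\mathcal{B}^\alpha: f(0)=0\}$ with the same norm. $\mathcal{Z}_\beta$ is the space of $f\in H(\mathbb{D})$ with $\sup_z(1-|z|^2)^\beta|f''(z)|<\infty$, normed by $|f(0)|+|f'(0)|+\sup_z(1-|z|^2)^\beta|f''(z)|$. For a bounded operator $T:X\to Y$ between Banach spaces, the essential norm is $\|T\|_{e,X\to Y}=\inf\{\|T-K\|: K:X\to Y \text{ compact}\}$; here $\|uC_\varphi\|_{e,\tilde{\mathcal{B}}^\alpha\to\mathcal{Z}_\beta}$ refers to the restriction of $uC_\varphi$ to $\tilde{\mathcal{B}}^\alpha$. *)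

theory Defs
  imports "HOL-Complex_Analysis.Complex_Analysis"
begin

type_synonym cfun = "complex \<Rightarrow> complex"

definition disk :: "complex set" where "disk = ball 0 1"

definition bloch_space :: "real \<Rightarrow> cfun set" where
  "bloch_space a = {f. f holomorphic_on disk \<and>
     bdd_above ((\<lambda>z. (1 - (cmod z)^2) powr a * cmod (deriv f z)) ` disk)}"

definition bloch_norm :: "real \<Rightarrow> cfun \<Rightarrow> real" where
  "bloch_norm a f = cmod (f 0) +
     (SUP z\<in>disk. (1 - (cmod z)^2) powr a * cmod (deriv f z))"

definition bloch0_space :: "real \<Rightarrow> cfun set" where
  "bloch0_space a = {f \<in> bloch_space a. f 0 = 0}"

definition zyg_space :: "real \<Rightarrow> cfun set" where
  "zyg_space b = {f. f holomorphic_on disk \<and>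
     bdd_above ((\<lambda>z. (1 - (cmod z)^2) powr b * cmod (deriv (deriv f) z)) ` disk)}"

definition zyg_norm :: "real \<Rightarrow> cfun \<Rightarrow> real" where
  "zyg_norm b f = cmod (f 0) + cmod (deriv f 0) +
     (SUP z\<in>disk. (1 - (cmod z)^2) powr b * cmod (deriv (deriv f) z))"

definition wcomp :: "cfun \<Rightarrow> cfun \<Rightarrow> cfun \<Rightarrow> cfun" where
  "wcomp u \<phi> f = (\<lambda>z. u z * f (\<phi> z))"

definition linear_on :: "cfun set \<Rightarrow> (cfun \<Rightarrow> cfun) \<Rightarrow> bool" where
  "linear_on X T \<longleftrightarrow> (\<forall>f\<in>X. \<forall>g\<in>X. T (\<lambda>z. f z + g z) = (\<lambda>z. T f z + T g z)) \<and>
                      (\<forall>c. \<forall>f\<in>X. T (\<lambda>z. c * f z) = (\<lambda>z. c * T f z))"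

definition bounded_op :: "cfun set \<Rightarrow> (cfun \<Rightarrow> real) \<Rightarrow> cfun set \<Rightarrow> (cfun \<Rightarrow> real)
    \<Rightarrow> (cfun \<Rightarrow> cfun) \<Rightarrow> bool" where
  "bounded_op X nX Y nY T \<longleftrightarrow> linear_on X T \<and> (\<forall>f\<in>X. T f \<in> Y) \<and>
      (\<exists>C. \<forall>f\<in>X. nY (T f) \<le> C * nX f)"

definition op_norm :: "cfun set \<Rightarrow> (cfun \<Rightarrow> real) \<Rightarrow> (cfun \<Rightarrow> real)
    \<Rightarrow> (cfun \<Rightarrow> cfun) \<Rightarrow> real" where
  "op_norm X nX nY T = Sup {nY (T f) | f. f \<in> X \<and> nX f \<le> 1}"

definition compact_op :: "cfun set \<Rightarrow> (cfun \<Rightarrow> real) \<Rightarrow> cfun set \<Rightarrow> (cfun \<Rightarrow> real)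
    \<Rightarrow> (cfun \<Rightarrow> cfun) \<Rightarrow> bool" where
  "compact_op X nX Y nY K \<longleftrightarrow> linear_on X K \<and> (\<forall>f\<in>X. K f \<in> Y) \<and>
     (\<forall>s::nat \<Rightarrow> cfun. (\<forall>n. s n \<in> X) \<longrightarrow> bdd_above (range (\<lambda>n. nX (s n))) \<longrightarrow>
        (\<exists>r g. strict_mono r \<and> g \<in> Y \<and>
               (\<lambda>n. nY (\<lambda>z. K (s (r n)) z - g z)) \<longlonglongrightarrow> 0))"

definition ess_norm :: "cfun set \<Rightarrow> (cfun \<Rightarrow> real) \<Rightarrow> cfun set \<Rightarrow> (cfun \<Rightarrow> real)
    \<Rightarrow> (cfun \<Rightarrow> cfun) \<Rightarrow> real" where
  "ess_norm X nX Y nY T =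
     Inf {op_norm X nX nY (\<lambda>f z. T f z - K f z) | K. compact_op X nX Y nY K}"

end

theory Submission imports Defs begin

lemma disk_open: "open disk" and zero_disk: "0 \<in> disk"
  by (auto simp: disk_def)

lemma wt_nn: "0 \<le> (1 - (cmod z)^2) powr b" by simp

lemma zyg_lin:
  assumes f: "f \<in> zyg_space b" and g: "g \<in> zyg_space b"
  shows "(\<lambda>z. a*f z + c*g z) \<in> zyg_space b \<and>
         zyg_norm b (\<lambda>z. a*f z + c*g z) \<le> cmod a * zyg_norm b f + cmod c * zyg_norm b g"
proof -
  have hf: "f holomorphic_on disk" and bf: "bdd_above ((\<lambda>z. (1 - (cmod z)^2) powr b * cmod (deriv (deriv f) z)) ` disk)"
    using f by (auto simp: zyg_space_def)
  have hg: "g holomorphic_on disk" and bg: "bdd_above ((\<lambda>z. (1 - (cmod z)^2) powr b * cmod (deriv (deriv g) z)) ` disk)"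
    using g by (auto simp: zyg_space_def)
  let ?h = "\<lambda>z. a*f z + c*g z"
  have hh: "?h holomorphic_on disk" using hf hg by (intro holomorphic_intros)
  have hd: "(deriv ^^ n) ?h z = a * (deriv ^^ n) f z + c * (deriv ^^ n) g z" if "z \<in> disk" for n z
  proof -
    have "(deriv ^^ n) ?h z = (deriv ^^ n) (\<lambda>z. a*f z) z + (deriv ^^ n) (\<lambda>z. c*g z) z"
      by (rule higher_deriv_add) (use hf hg that disk_open in \<open>auto intro: holomorphic_intros\<close>)
    also have "\<dots> = a * (deriv ^^ n) f z + c * (deriv ^^ n) g z"
      using higher_deriv_cmult[OF hf that disk_open] higher_deriv_cmult[OF hg that disk_open] by simp
    finally show ?thesis .
  qed
  have d1: "deriv ?h z = a * deriv f z + c * deriv g z" if "z \<in> disk" for z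
    using hd[OF that, of 1] by simp
  have d2: "deriv (deriv ?h) z = a * deriv (deriv f) z + c * deriv (deriv g) z" if "z \<in> disk" for z
    using hd[OF that, of 2] by (simp add: numeral_2_eq_2)
  define Sf where "Sf = (SUP z\<in>disk. (1 - (cmod z)^2) powr b * cmod (deriv (deriv f) z))"
  define Sg where "Sg = (SUP z\<in>disk. (1 - (cmod z)^2) powr b * cmod (deriv (deriv g) z))"
  have le: "(1 - (cmod z)^2) powr b * cmod (deriv (deriv ?h) z) \<le> cmod a * Sf + cmod c * Sg"
    if z: "z \<in> disk" for z
  proof -
    have "(1 - (cmod z)^2) powr b * cmod (deriv (deriv ?h) z)
       \<le> (1 - (cmod z)^2) powr b * (cmod a * cmod (deriv (deriv f) z) + cmod c * cmod (deriv (deriv g) z))"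
      unfolding d2[OF z] by (intro mult_left_mono) (auto intro: order_trans[OF norm_triangle_ineq] simp: norm_mult)
    also have "\<dots> = cmod a * ((1 - (cmod z)^2) powr b * cmod (deriv (deriv f) z)) + cmod c * ((1 - (cmod z)^2) powr b * cmod (deriv (deriv g) z))"
      by (simp add: algebra_simps)
    also have "\<dots> \<le> cmod a * Sf + cmod c * Sg"
      unfolding Sf_def Sg_def
      by (intro add_mono mult_left_mono cSUP_upper bf bg z) auto
    finally show ?thesis .
  qed
  have bh: "bdd_above ((\<lambda>z. (1 - (cmod z)^2) powr b * cmod (deriv (deriv ?h) z)) ` disk)"
    using le by (intro bdd_aboveI2) 
  have "(SUP z\<in>disk. (1 - (cmod z)^2) powr b * cmod (deriv (deriv ?h) z)) \<le> cmod a * Sf + cmod c * Sg"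
    using le zero_disk by (intro cSUP_least) auto
  moreover have "cmod (?h 0) \<le> cmod a * cmod (f 0) + cmod c * cmod (g 0)"
    by (auto intro: order_trans[OF norm_triangle_ineq] simp: norm_mult)
  moreover have "cmod (deriv ?h 0) \<le> cmod a * cmod (deriv f 0) + cmod c * cmod (deriv g 0)"
    unfolding d1[OF zero_disk] by (auto intro: order_trans[OF norm_triangle_ineq] simp: norm_mult)
  ultimately have "zyg_norm b ?h \<le> cmod a * zyg_norm b f + cmod c * zyg_norm b g"
    unfolding zyg_norm_def Sf_def[symmetric] Sg_def[symmetric] by (simp add: algebra_simps)
  with hh bh show ?thesis by (simp add: zyg_space_def)
qed

lemma zyg_nn: assumes "f \<in> zyg_space b" shows "0 \<le> zyg_norm b f"
proof -
  have "0 \<le> (1 - (cmod 0)^2) powr b * cmod (deriv (deriv f) 0)" by simp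
  also have "\<dots> \<le> (SUP z\<in>disk. (1 - (cmod z)^2) powr b * cmod (deriv (deriv f) z))"
    using assms zero_disk by (intro cSUP_upper) (auto simp: zyg_space_def)
  finally show ?thesis unfolding zyg_norm_def by simp
qed

lemma zyg_zero: "zyg_norm b (\<lambda>z. 0) = 0" "(\<lambda>z. 0) \<in> zyg_space b"
  using zero_disk by (auto simp: zyg_norm_def zyg_space_def intro!: cSUP_const)

lemma bloch_sup_nn: assumes "f \<in> bloch_space a"
  shows "0 \<le> (SUP z\<in>disk. (1 - (cmod z)^2) powr a * cmod (deriv f z))"
proof -
  have "0 \<le> (1 - (cmod 0)^2) powr a * cmod (deriv f 0)" by simp
  also have "\<dots> \<le> (SUP z\<in>disk. (1 - (cmod z)^2) powr a * cmod (deriv f z))"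
    using assms zero_disk by (intro cSUP_upper) (auto simp: bloch_space_def)
  finally show ?thesis .
qed

lemma bloch_f0_le: assumes "f \<in> bloch_space a" shows "cmod (f 0) \<le> bloch_norm a f"
  using bloch_sup_nn[OF assms] unfolding bloch_norm_def by simp

lemma bloch_shift:
  assumes f: "f \<in> bloch_space a"
  shows "(\<lambda>z. f z - f 0) \<in> bloch0_space a \<and> bloch_norm a (\<lambda>z. f z - f 0) \<le> bloch_norm a f"
proof -
  have hf: "f holomorphic_on disk" using f by (auto simp: bloch_space_def)
  have d: "deriv (\<lambda>z. f z - f 0) z = deriv f z" if "z \<in> disk" for z
    using higher_deriv_diff[OF hf _ disk_open that, of "\<lambda>_. f 0" 1] by simp
  have eq: "(\<lambda>z. (1 - (cmod z)^2) powr a * cmod (deriv (\<lambda>z. f z - f 0) z)) ` disk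
      = (\<lambda>z. (1 - (cmod z)^2) powr a * cmod (deriv f z)) ` disk"
    using d by (intro image_cong) auto
  have "(\<lambda>z. f z - f 0) holomorphic_on disk" using hf by (intro holomorphic_intros)
  then have "(\<lambda>z. f z - f 0) \<in> bloch0_space a"
    using f eq by (auto simp: bloch0_space_def bloch_space_def)
  moreover have "bloch_norm a (\<lambda>z. f z - f 0) \<le> bloch_norm a f"
    unfolding bloch_norm_def using eq by simp
  ultimately show ?thesis by blast
qed

lemma bloch_zero: "(\<lambda>z. 0) \<in> bloch0_space a" "bloch_norm a (\<lambda>z. 0) = 0"
  using zero_disk by (auto simp: bloch_norm_def bloch_space_def bloch0_space_def intro!: cSUP_const)

lemma bloch_one: "(\<lambda>z. 1) \<in> bloch_space a"
  by (auto simp: bloch_space_def)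

lemma compact_bdd:
  assumes K: "compact_op X nX (zyg_space b) (zyg_norm b) K"
  shows "bdd_above {zyg_norm b (K f) | f. f \<in> X \<and> nX f \<le> 1}"
proof (rule ccontr)
  assume nb: "\<not> ?thesis"
  have "\<exists>f. f \<in> X \<and> nX f \<le> 1 \<and> zyg_norm b (K f) > real n" for n
  proof (rule ccontr)
    assume "\<not> ?thesis"
    then have "bdd_above {zyg_norm b (K f) | f. f \<in> X \<and> nX f \<le> 1}"
      by (intro bdd_aboveI[of _ "real n"]) (auto simp: not_less)
    with nb show False by blast
  qed
  then obtain s where s: "\<And>n. s n \<in> X" "\<And>n. nX (s n) \<le> 1" "\<And>n. zyg_norm b (K (s n)) > real n"
    by metis
  have KY: "\<And>f. f \<in> X \<Longrightarrow> K f \<in> zyg_space b" using K by (auto simp: compact_op_def)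
  have "bdd_above (range (\<lambda>n. nX (s n)))" using s(2) by (intro bdd_aboveI[of _ 1]) auto
  then obtain r g where r: "strict_mono r" and g: "g \<in> zyg_space b"
    and lim: "(\<lambda>n. zyg_norm b (\<lambda>z. K (s (r n)) z - g z)) \<longlonglongrightarrow> 0"
    using K s(1) unfolding compact_op_def by blast
  from lim have "eventually (\<lambda>n. zyg_norm b (\<lambda>z. K (s (r n)) z - g z) < 1) sequentially"
    by (rule order_tendstoD) simp
  then obtain N where N: "\<And>n. n \<ge> N \<Longrightarrow> zyg_norm b (\<lambda>z. K (s (r n)) z - g z) < 1"
    by (auto simp: eventually_sequentially)
  obtain n where n: "n \<ge> N" "real n > 1 + zyg_norm b g"
    using reals_Archimedean2[of "1 + zyg_norm b g"] by (metis le_cases nat_le_real_less not_le of_nat_le_iff order.strict_trans2)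
  have dY: "(\<lambda>z. K (s (r n)) z - g z) \<in> zyg_space b"
    using zyg_lin[OF KY[OF s(1)] g, where a=1 and c="-1"] by simp
  have "K (s (r n)) = (\<lambda>z. 1 * (K (s (r n)) z - g z) + 1 * g z)" by simp
  then have "zyg_norm b (K (s (r n))) \<le> zyg_norm b (\<lambda>z. K (s (r n)) z - g z) + zyg_norm b g"
    using zyg_lin[OF dY g, where a=1 and c=1] by simp
  also have "\<dots> < 1 + zyg_norm b g" using N[OF n(1)] by simp
  also have "\<dots> < real n" by (fact n(2))
  also have "\<dots> \<le> real (r n)" using seq_suble[OF r] by simp
  finally show False using s(3)[of "r n"] by simp
qed

lemma opn_props:
  assumes Xsub: "X' \<subseteq> bloch_space a" and z: "(\<lambda>z. 0) \<in> X'"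
    and TY: "\<forall>f\<in>bloch_space a. T f \<in> zyg_space b"
    and C: "\<forall>f\<in>bloch_space a. zyg_norm b (T f) \<le> C * bloch_norm a f"
    and T0: "T (\<lambda>z. 0) = (\<lambda>z. 0)"
    and K: "compact_op X' (bloch_norm a) (zyg_space b) (zyg_norm b) K"
  shows "bdd_above {zyg_norm b (\<lambda>z. T f z - K f z) | f. f \<in> X' \<and> bloch_norm a f \<le> 1}"
    and "0 \<le> op_norm X' (bloch_norm a) (zyg_norm b) (\<lambda>f z. T f z - K f z)"
proof -
  obtain M where M: "\<And>f. f \<in> X' \<Longrightarrow> bloch_norm a f \<le> 1 \<Longrightarrow> zyg_norm b (K f) \<le> M"
    using compact_bdd[OF K] unfolding bdd_above_def by blast
  have KY: "\<And>f. f \<in> X' \<Longrightarrow> K f \<in> zyg_space b" using K by (auto simp: compact_op_def)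
  have le: "zyg_norm b (\<lambda>z. T f z - K f z) \<le> \<bar>C\<bar> + M" if f: "f \<in> X'" "bloch_norm a f \<le> 1" for f
  proof -
    have fX: "f \<in> bloch_space a" using f Xsub by auto
    have n0: "0 \<le> bloch_norm a f" using bloch_f0_le[OF fX] norm_ge_zero order_trans by blast
    have "zyg_norm b (\<lambda>z. T f z - K f z) \<le> cmod 1 * zyg_norm b (T f) + cmod (-1) * zyg_norm b (K f)"
      using zyg_lin[OF TY[rule_format, OF fX] KY[OF f(1)], where a=1 and c="-1"] by simp
    also have "\<dots> \<le> \<bar>C\<bar> + M"
    proof -
      have "C * bloch_norm a f \<le> \<bar>C\<bar> * 1"
        using n0 f(2) by (meson abs_ge_self abs_ge_zero mult_mono order_trans mult_right_mono)
      moreover have "zyg_norm b (T f) \<le> C * bloch_norm a f" using C fX by blast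
      ultimately show ?thesis using M[OF f] by simp
    qed
    finally show ?thesis .
  qed
  show bdd: "bdd_above {zyg_norm b (\<lambda>z. T f z - K f z) | f. f \<in> X' \<and> bloch_norm a f \<le> 1}"
    using le by (intro bdd_aboveI[of _ "\<bar>C\<bar> + M"]) auto
  have K0: "K (\<lambda>z. 0) = (\<lambda>z. 0)"
  proof -
    have "\<forall>c. \<forall>f\<in>X'. K (\<lambda>z. c * f z) = (\<lambda>z. c * K f z)"
      using K unfolding compact_op_def linear_on_def by (elim conjE) assumption
    from this[rule_format, OF z, of 0] show ?thesis by simp
  qed
  have "0 \<in> {zyg_norm b (\<lambda>z. T f z - K f z) | f. f \<in> X' \<and> bloch_norm a f \<le> 1}"
    using z K0 T0 zyg_zero bloch_zero by (intro CollectI exI[of _ "\<lambda>z. 0"]) auto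
  then show "0 \<le> op_norm X' (bloch_norm a) (zyg_norm b) (\<lambda>f z. T f z - K f z)"
    unfolding op_norm_def using bdd by (intro cSup_upper) auto
qed

lemma zero_compact: "compact_op X' nX (zyg_space b) (zyg_norm b) (\<lambda>f z. 0)"
  unfolding compact_op_def linear_on_def
proof (intro conjI allI impI ballI)
  fix s :: "nat \<Rightarrow> cfun"
  show "\<exists>(r::nat\<Rightarrow>nat) g. strict_mono r \<and> g \<in> zyg_space b \<and> (\<lambda>n. zyg_norm b (\<lambda>z. 0 - g z)) \<longlonglongrightarrow> 0"
  proof -
    have "strict_mono (id::nat\<Rightarrow>nat)" by (simp add: strict_mono_def)
    moreover have "(\<lambda>n::nat. zyg_norm b (\<lambda>z. 0 - (\<lambda>z. 0) z)) \<longlonglongrightarrow> 0" by (simp add: zyg_zero)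
    ultimately show ?thesis using zyg_zero(2)[of b] by (intro exI[where x=id] exI[where x="\<lambda>z. 0"] conjI)
  qed
qed (auto simp: zyg_zero)

lemma extension_compact:
  assumes uY: "u \<in> zyg_space b"
    and K0: "compact_op (bloch0_space a) (bloch_norm a) (zyg_space b) (zyg_norm b) K0"
  shows "compact_op (bloch_space a) (bloch_norm a) (zyg_space b) (zyg_norm b)
           (\<lambda>f z. K0 (\<lambda>w. f w - f 0) z + f 0 * u z)"
proof -
  define K where "K = (\<lambda>f z. K0 (\<lambda>w. f w - f 0) z + f 0 * u z)"
  have all0: "((\<forall>f\<in>bloch0_space a. \<forall>g\<in>bloch0_space a. K0 (\<lambda>z. f z + g z) = (\<lambda>z. K0 f z + K0 g z))
     \<and> (\<forall>c. \<forall>f\<in>bloch0_space a. K0 (\<lambda>z. c * f z) = (\<lambda>z. c * K0 f z)))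
    \<and> (\<forall>f\<in>bloch0_space a. K0 f \<in> zyg_space b)
    \<and> (\<forall>s::nat \<Rightarrow> cfun. (\<forall>n. s n \<in> bloch0_space a) \<longrightarrow> bdd_above (range (\<lambda>n. bloch_norm a (s n))) \<longrightarrow>
        (\<exists>r g. strict_mono r \<and> g \<in> zyg_space b \<and>
               (\<lambda>n. zyg_norm b (\<lambda>z. K0 (s (r n)) z - g z)) \<longlonglongrightarrow> 0))"
    using K0 unfolding compact_op_def linear_on_def .
  note add0 = all0[THEN conjunct1, THEN conjunct1]
  note mul0 = all0[THEN conjunct1, THEN conjunct2]
  note KY0 = all0[THEN conjunct2, THEN conjunct1]
  note seq0 = all0[THEN conjunct2, THEN conjunct2]
  have sh: "\<And>f. f \<in> bloch_space a \<Longrightarrow> (\<lambda>z. f z - f 0) \<in> bloch0_space a"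
    using bloch_shift by blast
  have lin: "linear_on (bloch_space a) K"
    unfolding linear_on_def
  proof (intro conjI ballI allI)
    fix f g assume f: "f \<in> bloch_space a" and g: "g \<in> bloch_space a"
    have e: "(\<lambda>w. f w + g w - (f 0 + g 0)) = (\<lambda>w. (\<lambda>w. f w - f 0) w + (\<lambda>w. g w - g 0) w)"
      by (rule ext) (simp add: algebra_simps)
    show "K (\<lambda>z. f z + g z) = (\<lambda>z. K f z + K g z)"
      unfolding K_def e add0[rule_format, OF sh[OF f] sh[OF g]]
      by (rule ext) (simp add: algebra_simps)
  next
    fix c f assume f: "f \<in> bloch_space a"
    have e: "(\<lambda>w. c * f w - c * f 0) = (\<lambda>w. c * (\<lambda>w. f w - f 0) w)"
      by (rule ext) (simp add: algebra_simps)
    show "K (\<lambda>z. c * f z) = (\<lambda>z. c * K f z)"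
      unfolding K_def e mul0[rule_format, OF sh[OF f]]
      by (rule ext) (simp add: algebra_simps)
  qed
  have KY: "K f \<in> zyg_space b" if f: "f \<in> bloch_space a" for f
  proof -
    have "K f = (\<lambda>z. 1 * K0 (\<lambda>w. f w - f 0) z + f 0 * u z)" by (simp add: K_def)
    then show ?thesis using zyg_lin[OF KY0[rule_format, OF sh[OF f]] uY, where a=1 and c="f 0"] by simp
  qed
  have sq: "\<exists>r g. strict_mono r \<and> g \<in> zyg_space b \<and>
               (\<lambda>n. zyg_norm b (\<lambda>z. K (s (r n)) z - g z)) \<longlonglongrightarrow> 0"
    if s: "\<forall>n. s n \<in> bloch_space a" and sb: "bdd_above (range (\<lambda>n. bloch_norm a (s n)))"
    for s :: "nat \<Rightarrow> cfun"
  proof -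
    define t where "t = (\<lambda>n w. s n w - s n 0)"
    have t: "\<forall>n. t n \<in> bloch0_space a" "\<And>n. bloch_norm a (t n) \<le> bloch_norm a (s n)"
      using bloch_shift s unfolding t_def by blast+
    obtain M where M: "\<And>n. bloch_norm a (s n) \<le> M" using sb by (auto simp: bdd_above_def)
    have "bdd_above (range (\<lambda>n. bloch_norm a (t n)))"
      using t(2) M by (intro bdd_aboveI[of _ M]) (auto intro: order_trans)
    then obtain r1 g0 where r1: "strict_mono r1" and g0: "g0 \<in> zyg_space b"
      and l0: "(\<lambda>n. zyg_norm b (\<lambda>z. K0 (t (r1 n)) z - g0 z)) \<longlonglongrightarrow> 0"
      using seq0 t(1) by blast
    define c where "c = (\<lambda>n. s (r1 n) 0)"
    have "bounded (range c)"
      unfolding bounded_iff c_def using bloch_f0_le[OF s[rule_format]] M by (intro exI[of _ M]) (auto intro: order_trans)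
    then obtain l r2 where r2: "strict_mono (r2::nat\<Rightarrow>nat)" and cl: "(c \<circ> r2) \<longlonglongrightarrow> l"
      using bounded_imp_convergent_subsequence by blast
    define g where "g = (\<lambda>z. 1 * g0 z + l * u z)"
    have gY: "g \<in> zyg_space b" unfolding g_def using zyg_lin[OF g0 uY] by blast
    define D where "D = (\<lambda>n z. K0 (t (r1 n)) z - g0 z)"
    have DY: "D n \<in> zyg_space b" for n
      unfolding D_def using zyg_lin[OF KY0[rule_format, OF t(1)[rule_format]] g0, where a=1 and c="-1"] by simp
    have ub: "zyg_norm b (\<lambda>z. K (s ((r1 \<circ> r2) n)) z - g z)
             \<le> zyg_norm b (D (r2 n)) + cmod (c (r2 n) - l) * zyg_norm b u" for n
    proof -
      have "(\<lambda>z. K (s ((r1 \<circ> r2) n)) z - g z) = (\<lambda>z. 1 * D (r2 n) z + (c (r2 n) - l) * u z)"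
        by (rule ext) (simp add: K_def g_def D_def t_def c_def algebra_simps)
      then show ?thesis using zyg_lin[OF DY[of "r2 n"] uY, where a=1 and c="c (r2 n) - l"] by simp
    qed
    have lb: "0 \<le> zyg_norm b (\<lambda>z. K (s ((r1 \<circ> r2) n)) z - g z)" for n
      using zyg_lin[OF KY[OF s[rule_format]] gY, where a=1 and c="-1"] zyg_nn by simp
    have "(\<lambda>n. zyg_norm b (D (r2 n)) + cmod (c (r2 n) - l) * zyg_norm b u) \<longlonglongrightarrow> 0 + 0 * zyg_norm b u"
    proof (intro tendsto_intros)
      show "(\<lambda>n. zyg_norm b (D (r2 n))) \<longlonglongrightarrow> 0"
        using LIMSEQ_subseq_LIMSEQ[OF l0 r2] by (simp add: D_def o_def)
      have "(\<lambda>n. c (r2 n) - l) \<longlonglongrightarrow> 0" using cl by (simp add: o_def LIM_zero)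
      then show "(\<lambda>n. cmod (c (r2 n) - l)) \<longlonglongrightarrow> 0" by (simp add: tendsto_norm_zero)
    qed
    then have lim2: "(\<lambda>n. zyg_norm b (D (r2 n)) + cmod (c (r2 n) - l) * zyg_norm b u) \<longlonglongrightarrow> 0"
      by simp
    have e1: "eventually (\<lambda>n. (\<lambda>_. 0) n \<le> zyg_norm b (\<lambda>z. K (s ((r1 \<circ> r2) n)) z - g z)) sequentially"
      using lb by (intro always_eventually allI) simp
    have e2: "eventually (\<lambda>n. zyg_norm b (\<lambda>z. K (s ((r1 \<circ> r2) n)) z - g z) \<le> zyg_norm b (D (r2 n)) + cmod (c (r2 n) - l) * zyg_norm b u) sequentially"
      using ub by (intro always_eventually allI) (rule ub)
    have "(\<lambda>n. zyg_norm b (\<lambda>z. K (s ((r1 \<circ> r2) n)) z - g z)) \<longlonglongrightarrow> 0"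
      by (rule tendsto_sandwich[OF e1 e2 tendsto_const lim2])
    moreover have "strict_mono (r1 \<circ> r2)" using r1 r2 by (rule strict_mono_o)
    ultimately show ?thesis using gY by blast
  qed
  show ?thesis unfolding K_def[symmetric] compact_op_def using lin KY sq by blast
qed

theorem lemma4p1:
  fixes \<alpha> \<beta> :: real and u \<phi> :: "complex \<Rightarrow> complex"
  assumes "0 < \<alpha>" and "0 < \<beta>"
    and "u holomorphic_on disk"
    and "\<phi> holomorphic_on disk" and "\<phi> ` disk \<subseteq> disk"
    and "bounded_op (bloch_space \<alpha>) (bloch_norm \<alpha>) (zyg_space \<beta>) (zyg_norm \<beta>) (wcomp u \<phi>)"
  shows "ess_norm (bloch0_space \<alpha>) (bloch_norm \<alpha>) (zyg_space \<beta>) (zyg_norm \<beta>) (wcomp u \<phi>)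
       = ess_norm (bloch_space \<alpha>) (bloch_norm \<alpha>) (zyg_space \<beta>) (zyg_norm \<beta>) (wcomp u \<phi>)"
proof -
  let ?T = "wcomp u \<phi>"
  have TY: "\<forall>f\<in>bloch_space \<alpha>. ?T f \<in> zyg_space \<beta>" using assms(6) by (simp add: bounded_op_def)
  obtain C where C: "\<forall>f\<in>bloch_space \<alpha>. zyg_norm \<beta> (?T f) \<le> C * bloch_norm \<alpha> f"
    using assms(6) by (auto simp: bounded_op_def)
  have T0: "?T (\<lambda>z. 0) = (\<lambda>z. 0)" by (simp add: wcomp_def)
  have "?T (\<lambda>z. 1) = u" by (simp add: wcomp_def)
  then have uY: "u \<in> zyg_space \<beta>" using TY bloch_one by metis
  have sub: "bloch0_space \<alpha> \<subseteq> bloch_space \<alpha>" by (auto simp: bloch0_space_def)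
  have z0: "(\<lambda>z. 0) \<in> bloch0_space \<alpha>" by (rule bloch_zero)
  have z1: "(\<lambda>z. 0) \<in> bloch_space \<alpha>" using z0 sub by blast
  define A where "A = {op_norm (bloch0_space \<alpha>) (bloch_norm \<alpha>) (zyg_norm \<beta>) (\<lambda>f z. ?T f z - K f z) | K.
      compact_op (bloch0_space \<alpha>) (bloch_norm \<alpha>) (zyg_space \<beta>) (zyg_norm \<beta>) K}"
  define B where "B = {op_norm (bloch_space \<alpha>) (bloch_norm \<alpha>) (zyg_norm \<beta>) (\<lambda>f z. ?T f z - K f z) | K.
      compact_op (bloch_space \<alpha>) (bloch_norm \<alpha>) (zyg_space \<beta>) (zyg_norm \<beta>) K}"
  have Ane: "A \<noteq> {}" unfolding A_def using zero_compact by blast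
  have Bne: "B \<noteq> {}" unfolding B_def using zero_compact by blast
  have Alb: "\<And>x. x \<in> A \<Longrightarrow> 0 \<le> x"
    unfolding A_def using opn_props(2)[OF sub z0 TY C T0] by blast
  have Blb: "\<And>x. x \<in> B \<Longrightarrow> 0 \<le> x"
    unfolding B_def using opn_props(2)[OF order_refl z1 TY C T0] by blast
  have c1: "\<exists>a\<in>A. a \<le> b" if bB: "b \<in> B" for b
  proof -
    obtain K where K: "compact_op (bloch_space \<alpha>) (bloch_norm \<alpha>) (zyg_space \<beta>) (zyg_norm \<beta>) K"
      and b: "b = op_norm (bloch_space \<alpha>) (bloch_norm \<alpha>) (zyg_norm \<beta>) (\<lambda>f z. ?T f z - K f z)"
      using bB unfolding B_def by blast
    have K0: "compact_op (bloch0_space \<alpha>) (bloch_norm \<alpha>) (zyg_space \<beta>) (zyg_norm \<beta>) K"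
      using K sub unfolding compact_op_def linear_on_def by (meson subsetD)
    have "op_norm (bloch0_space \<alpha>) (bloch_norm \<alpha>) (zyg_norm \<beta>) (\<lambda>f z. ?T f z - K f z) \<le> b"
      unfolding b op_norm_def
    proof (rule cSup_subset_mono)
      show "{zyg_norm \<beta> (\<lambda>z. ?T f z - K f z) |f. f \<in> bloch0_space \<alpha> \<and> bloch_norm \<alpha> f \<le> 1} \<noteq> {}"
        using z0 bloch_zero(2)[of \<alpha>] by (auto intro!: exI[of _ "\<lambda>z. 0"])
      show "bdd_above {zyg_norm \<beta> (\<lambda>z. ?T f z - K f z) |f. f \<in> bloch_space \<alpha> \<and> bloch_norm \<alpha> f \<le> 1}"
        by (rule opn_props(1)[OF order_refl z1 TY C T0 K])
      show "{zyg_norm \<beta> (\<lambda>z. ?T f z - K f z) |f. f \<in> bloch0_space \<alpha> \<and> bloch_norm \<alpha> f \<le> 1}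
          \<subseteq> {zyg_norm \<beta> (\<lambda>z. ?T f z - K f z) |f. f \<in> bloch_space \<alpha> \<and> bloch_norm \<alpha> f \<le> 1}"
        using sub by blast
    qed
    then show ?thesis using K0 unfolding A_def by blast
  qed
  have c2: "\<exists>b\<in>B. b \<le> a" if aA: "a \<in> A" for a
  proof -
    obtain K0 where K0: "compact_op (bloch0_space \<alpha>) (bloch_norm \<alpha>) (zyg_space \<beta>) (zyg_norm \<beta>) K0"
      and a: "a = op_norm (bloch0_space \<alpha>) (bloch_norm \<alpha>) (zyg_norm \<beta>) (\<lambda>f z. ?T f z - K0 f z)"
      using aA unfolding A_def by blast
    define K where "K = (\<lambda>f z. K0 (\<lambda>w. f w - f 0) z + f 0 * u z)"
    have K: "compact_op (bloch_space \<alpha>) (bloch_norm \<alpha>) (zyg_space \<beta>) (zyg_norm \<beta>) K"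
      unfolding K_def by (rule extension_compact[OF uY K0])
    have bdd0: "bdd_above {zyg_norm \<beta> (\<lambda>z. ?T f z - K0 f z) |f. f \<in> bloch0_space \<alpha> \<and> bloch_norm \<alpha> f \<le> 1}"
      by (rule opn_props(1)[OF sub z0 TY C T0 K0])
    have "op_norm (bloch_space \<alpha>) (bloch_norm \<alpha>) (zyg_norm \<beta>) (\<lambda>f z. ?T f z - K f z) \<le> a"
      unfolding a op_norm_def
    proof (rule cSup_least)
      show "{zyg_norm \<beta> ((\<lambda>f z. ?T f z - K f z) f) |f. f \<in> bloch_space \<alpha> \<and> bloch_norm \<alpha> f \<le> 1} \<noteq> {}"
        using z1 bloch_zero(2)[of \<alpha>] by (auto intro!: exI[of _ "\<lambda>z. 0"])
      fix x assume "x \<in> {zyg_norm \<beta> ((\<lambda>f z. ?T f z - K f z) f) |f. f \<in> bloch_space \<alpha> \<and> bloch_norm \<alpha> f \<le> 1}"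
      then obtain f where f: "f \<in> bloch_space \<alpha>" "bloch_norm \<alpha> f \<le> 1"
        and x: "x = zyg_norm \<beta> (\<lambda>z. ?T f z - K f z)" by auto
      define h where "h = (\<lambda>w. f w - f 0)"
      have h: "h \<in> bloch0_space \<alpha>" "bloch_norm \<alpha> h \<le> 1"
        using bloch_shift[OF f(1)] f(2) unfolding h_def by auto
      have "(\<lambda>z. ?T f z - K f z) = (\<lambda>z. ?T h z - K0 h z)"
        by (rule ext) (simp add: K_def h_def wcomp_def algebra_simps)
      then have "x \<in> {zyg_norm \<beta> ((\<lambda>f z. ?T f z - K0 f z) f) |f. f \<in> bloch0_space \<alpha> \<and> bloch_norm \<alpha> f \<le> 1}"
        using x h by auto
      then show "x \<le> Sup {zyg_norm \<beta> ((\<lambda>f z. ?T f z - K0 f z) f) |f. f \<in> bloch0_space \<alpha> \<and> bloch_norm \<alpha> f \<le> 1}"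
        using bdd0 by (intro cSup_upper) auto
    qed
    then show ?thesis using K unfolding B_def by blast
  qed
  have "Inf A \<le> Inf B"
  proof (rule cInf_greatest[OF Bne])
    fix b assume "b \<in> B"
    then obtain a where "a \<in> A" "a \<le> b" using c1 by blast
    then show "Inf A \<le> b" using Alb by (meson bdd_belowI cInf_lower order_trans)
  qed
  moreover have "Inf B \<le> Inf A"
  proof (rule cInf_greatest[OF Ane])
    fix a assume "a \<in> A"
    then obtain b where "b \<in> B" "b \<le> a" using c2 by blast
    then show "Inf B \<le> a" using Blb by (meson bdd_belowI cInf_lower order_trans)
  qed
  ultimately show ?thesis unfolding ess_norm_def A_def[symmetric] B_def[symmetric] by simp
qed

end
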